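(* For every power bounded $T\in\mathcal{B}(\mathbb{C}^2)$ of class $C_{11}$, the Cesàro asymptotic limits $A_{T,C}$ and $A_{T^*,C}$ are invertible and $A_{T,C}^{-1}+A_{T^*,C}^{-1}=2I_2$.
   Context: For a power bounded matrix $T$, $A_{T,C}=\lim_{n\to\infty}\frac1n\sum_{j=1}^nT^{*j}T^j$. $\mathcal{H}_0(T)=\{x:\|T^nx\|\to0\}$; $T$ is of class $C_{11}$ if $\mathcal{H}_0(T)=\{0\}$ and $\mathcal{H}_0(T^* )=\{0\}$. *)

theory Defs
  imports "HOL-Analysis.Analysis"
begin

text \<open>Complex n x n matrices are modelled as complex^'n^'n (HOL-Analysis),
  with the norm topology of that type (all norms on a finite-dimensional
  space are equivalent).\<close>

definition mpow :: "complex^'n^'n \<Rightarrow> nat \<Rightarrow> complex^'n^'n" where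
  "mpow A k = ((\<lambda>M. A ** M) ^^ k) (mat 1)"

definition cadj :: "complex^'n^'m \<Rightarrow> complex^'m^'n" where
  "cadj A = (\<chi> i j. cnj (A $ j $ i))"

definition power_bounded :: "complex^'n^'n \<Rightarrow> bool" where
  "power_bounded T \<longleftrightarrow> (\<exists>M. \<forall>k. norm (mpow T k) \<le> M)"

definition H0 :: "complex^'n^'n \<Rightarrow> (complex^'n) set" where
  "H0 T = {x. (\<lambda>k. norm (mpow T k *v x)) \<longlonglongrightarrow> 0}"

definition class_C11 :: "complex^'n^'n \<Rightarrow> bool" where
  "class_C11 T \<longleftrightarrow> H0 T = {0} \<and> H0 (cadj T) = {0}"

definition cesaro_mean :: "complex^'n^'n \<Rightarrow> nat \<Rightarrow> complex^'n^'n" where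
  "cesaro_mean T n = (1 / real n) *\<^sub>R (\<Sum>j=1..n. mpow (cadj T) j ** mpow T j)"

end

theory Submission
  imports Defs
begin


lemma mpow_0: "mpow A 0 = mat 1" by (simp add: mpow_def)
lemma mpow_Suc: "mpow A (Suc k) = A ** mpow A k" by (simp add: mpow_def)

lemma eig_pow:
  fixes T :: "complex^'n^'n"
  assumes "\<And>i. (\<Sum>k\<in>UNIV. T$i$k * v$k) = l * v$i"
  shows "mpow T n *v v = (\<chi> i. l^n * v$i)"
proof (induction n)
  case 0 then show ?case by (simp add: mpow_0 vec_eq_iff)
next
  case (Suc n)
  have "mpow T (Suc n) *v v = T *v (mpow T n *v v)"
    by (simp add: mpow_Suc matrix_vector_mul_assoc)
  also have "\<dots> = T *v (\<chi> i. l^n * v$i)" by (simp add: Suc)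
  also have "\<dots> = (\<chi> i. l^Suc n * v$i)"
    using assms by (simp add: matrix_vector_mult_def vec_eq_iff mult.left_commute[of _ "l^n"] 
        flip: sum_distrib_left)
  finally show ?case .
qed

lemma norm_le_sum_cart: "norm (x::'a::real_normed_vector^'n) \<le> (\<Sum>i\<in>UNIV. norm (x$i))"
  unfolding norm_vec_def by (rule L2_set_le_sum) auto

lemma entry_le_norm: "cmod (A$i$j) \<le> norm (A::complex^'n^'m)"
  by (meson Finite_Cartesian_Product.norm_nth_le[where x="A$i" and i=j] Finite_Cartesian_Product.norm_nth_le[where x=A and i=i] order_trans)

lemma eig_le1:
  fixes T :: "complex^'n^'n"
  assumes pb: "power_bounded T" and ev: "\<And>i. (\<Sum>k\<in>UNIV. T$i$k * v$k) = l * v$i" and v: "v \<noteq> 0"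
  shows "cmod l \<le> 1"
proof (rule ccontr)
  assume "\<not> cmod l \<le> 1"
  hence l1: "1 < cmod l" by simp
  obtain M where M: "\<And>k. norm (mpow T k) \<le> M" using pb unfolding power_bounded_def by blast
  obtain i where vi: "v$i \<noteq> 0" using v by (metis vec_eq_iff zero_index)
  define C where "C = (\<Sum>k\<in>UNIV. cmod (v$k))"
  have b: "cmod l ^ n * cmod (v$i) \<le> M * C" for n
  proof -
    have "cmod l ^ n * cmod (v$i) = cmod ((mpow T n *v v)$i)"
      using eig_pow[OF ev, of n] by (simp add: norm_mult norm_power)
    also have "\<dots> = cmod (\<Sum>k\<in>UNIV. mpow T n $i$k * v$k)" by (simp add: matrix_vector_mult_def)
    also have "\<dots> \<le> (\<Sum>k\<in>UNIV. cmod (mpow T n $i$k * v$k))" by (rule norm_sum)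
    also have "\<dots> \<le> (\<Sum>k\<in>UNIV. M * cmod (v$k))"
      by (rule sum_mono) (simp add: norm_mult mult_right_mono entry_le_norm[THEN order_trans] M)
    finally show ?thesis by (simp add: C_def sum_distrib_left)
  qed
  obtain n where "M * C / cmod (v$i) < cmod l ^ n" using real_arch_pow[OF l1] by blast
  with b[of n] vi show False by (simp add: field_simps)
qed

lemma eig_ge1:
  fixes T :: "complex^'n^'n"
  assumes h: "H0 T = {0}" and ev: "\<And>i. (\<Sum>k\<in>UNIV. T$i$k * v$k) = l * v$i" and v: "v \<noteq> 0"
  shows "1 \<le> cmod l"
proof (rule ccontr)
  assume "\<not> 1 \<le> cmod l"
  hence l1: "cmod l < 1" by simp
  have "v \<in> H0 T" unfolding H0_def
  proof (simp, rule Lim_null_comparison)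
    show "\<forall>\<^sub>F k in sequentially. norm (norm (mpow T k *v v)) \<le> cmod l ^ k * (\<Sum>i\<in>UNIV. cmod (v$i))"
    proof (intro always_eventually allI)
      fix k
      have "norm (norm (mpow T k *v v)) = norm (mpow T k *v v)" by simp
      also have "\<dots> \<le> (\<Sum>i\<in>UNIV. cmod ((mpow T k *v v)$i))" by (rule norm_le_sum_cart)
      also have "\<dots> = cmod l ^ k * (\<Sum>i\<in>UNIV. cmod (v$i))"
        by (simp add: eig_pow[OF ev] norm_mult norm_power sum_distrib_left)
      finally show "norm (norm (mpow T k *v v)) \<le> cmod l ^ k * (\<Sum>i\<in>UNIV. cmod (v$i))" .
    qed
    show "(\<lambda>k. cmod l ^ k * (\<Sum>i\<in>UNIV. cmod (v$i))) \<longlonglongrightarrow> 0"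
      using l1 by (intro tendsto_mult_left_zero LIMSEQ_power_zero) auto
  qed
  with h v show False by simp
qed

lemma mpow_form:
  fixes T P Q :: "complex^'n^'n"
  assumes TP: "\<And>i j. (\<Sum>k\<in>UNIV. T$i$k * P$k$j) = l1 * P$i$j"
    and TQ: "\<And>i j. (\<Sum>k\<in>UNIV. T$i$k * Q$k$j) = l2 * Q$i$j"
    and PQ: "\<And>i j. P$i$j + Q$i$j = mat 1 $i$j"
  shows "mpow T n = (\<chi> i j. l1^n * P$i$j + l2^n * Q$i$j)"
proof (induction n)
  case 0 then show ?case using PQ by (simp add: mpow_0 vec_eq_iff)
next
  case (Suc n)
  have "mpow T (Suc n) = T ** (\<chi> i j. l1^n * P$i$j + l2^n * Q$i$j)" by (simp add: mpow_Suc Suc)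
  also have "\<dots> = (\<chi> i j. l1^Suc n * P$i$j + l2^Suc n * Q$i$j)"
  proof -
    have "(\<Sum>k\<in>UNIV. T$i$k * (l1^n * P$k$j + l2^n * Q$k$j)) = l1^Suc n * P$i$j + l2^Suc n * Q$i$j" for i j
    proof -
      have "(\<Sum>k\<in>UNIV. T$i$k * (l1^n * P$k$j + l2^n * Q$k$j))
          = l1^n * (\<Sum>k\<in>UNIV. T$i$k * P$k$j) + l2^n * (\<Sum>k\<in>UNIV. T$i$k * Q$k$j)"
        by (simp add: sum_distrib_left sum.distrib algebra_simps)
      then show ?thesis by (simp add: TP TQ)
    qed
    then show ?thesis by (simp add: matrix_matrix_mult_def vec_eq_iff)
  qed
  finally show ?case .
qed

lemma cesaro_geo:
  fixes m :: complex
  assumes "cmod m = 1" "m \<noteq> 1"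
  shows "(\<lambda>n. of_real (1 / real n) * (\<Sum>j=1..n. m^j)) \<longlonglongrightarrow> 0"
proof (rule Lim_null_comparison)
  have m0: "m - 1 \<noteq> 0" using assms by simp
  have "cmod (\<Sum>j=1..n. m^j) \<le> 2 / cmod (m - 1)" for n
  proof -
    have "(\<Sum>j=1..n. m^j) = m * (\<Sum>j<n. m^j)"
      by (induction n) (simp_all add: algebra_simps)
    also have "\<dots> = m * ((m^n - 1) / (m - 1))" using assms by (simp add: geometric_sum)
    finally have e: "(\<Sum>j=1..n. m^j) = m * ((m^n - 1) / (m - 1))" .
    have "cmod (m^n - 1) \<le> cmod (m^n) + cmod (1::complex)" by (rule norm_triangle_ineq4)
    hence "cmod (m^n - 1) \<le> 2" using assms by (simp add: norm_power)
    then show ?thesis unfolding e using assms m0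
      by (simp add: norm_mult norm_divide divide_right_mono)
  qed
  then show "\<forall>\<^sub>F n in sequentially. norm (of_real (1 / real n) * (\<Sum>j=1..n. m^j)) \<le> (1 / real n) * (2 / cmod (m - 1))"
    by (intro always_eventually allI) (metis norm_mult norm_of_real abs_of_nonneg divide_nonneg_nonneg of_nat_0_le_iff zero_le_one mult_left_mono)
  show "(\<lambda>n. (1 / real n) * (2 / cmod (m - 1))) \<longlonglongrightarrow> 0"
    using lim_const_over_n[of "1::real"] by (rule tendsto_mult_left_zero)
qed

lemma cesaro_gen:
  fixes X1 X2 Y1 Y2 :: "complex^'n^'n"
  assumes ab1: "a1 * b1 = 1" and ab2: "a2 * b2 = 1"
    and m1: "cmod (a1 * b2) = 1" "a1 * b2 \<noteq> 1"
    and m2: "cmod (a2 * b1) = 1" "a2 * b1 \<noteq> 1"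
  shows "(\<lambda>n. (1 / real n) *\<^sub>R (\<Sum>j=1..n. (\<chi> i k. a1^j * X1$i$k + a2^j * X2$i$k) ** (\<chi> i k. b1^j * Y1$i$k + b2^j * Y2$i$k)))
     \<longlonglongrightarrow> X1 ** Y1 + X2 ** Y2"
proof (rule vec_tendstoI, rule vec_tendstoI)
  fix i k
  define c1 where "c1 = (X1 ** Y1 + X2 ** Y2) $ i $ k"
  define c3 where "c3 = (\<Sum>m\<in>UNIV. X1$i$m * Y2$m$k)"
  define c4 where "c4 = (\<Sum>m\<in>UNIV. X2$i$m * Y1$m$k)"
  have trm: "((\<chi> i k. a1^j * X1$i$k + a2^j * X2$i$k) ** (\<chi> i k. b1^j * Y1$i$k + b2^j * Y2$i$k)) $ i $ k
      = c1 + (a1*b2)^j * c3 + (a2*b1)^j * c4" for j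
  proof -
    have "((\<chi> i k. a1^j * X1$i$k + a2^j * X2$i$k) ** (\<chi> i k. b1^j * Y1$i$k + b2^j * Y2$i$k)) $ i $ k
      = (\<Sum>m\<in>UNIV. (a1*b1)^j * (X1$i$m * Y1$m$k) + (a2*b2)^j * (X2$i$m * Y2$m$k)
            + (a1*b2)^j * (X1$i$m * Y2$m$k) + (a2*b1)^j * (X2$i$m * Y1$m$k))"
      by (simp add: matrix_matrix_mult_def power_mult_distrib algebra_simps)
    also have "\<dots> = c1 + (a1*b2)^j * c3 + (a2*b1)^j * c4"
      by (simp add: ab1 ab2 c1_def c3_def c4_def matrix_matrix_mult_def sum.distrib sum_distrib_left)
    finally show ?thesis .
  qed
  have ev: "\<forall>\<^sub>F n in sequentially. c1 + c3 * (of_real (1 / real n) * (\<Sum>j=1..n. (a1*b2)^j))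
           + c4 * (of_real (1 / real n) * (\<Sum>j=1..n. (a2*b1)^j))
     = ((1 / real n) *\<^sub>R (\<Sum>j=1..n. (\<chi> i k. a1^j * X1$i$k + a2^j * X2$i$k) ** (\<chi> i k. b1^j * Y1$i$k + b2^j * Y2$i$k))) $ i $ k"
  proof (rule eventually_sequentiallyI[of 1])
    fix n :: nat assume n: "1 \<le> n"
    have "((1 / real n) *\<^sub>R (\<Sum>j=1..n. (\<chi> i k. a1^j * X1$i$k + a2^j * X2$i$k) ** (\<chi> i k. b1^j * Y1$i$k + b2^j * Y2$i$k))) $ i $ k
       = of_real (1 / real n) * (\<Sum>j=1..n. c1 + (a1*b2)^j * c3 + (a2*b1)^j * c4)"
      by (simp add: trm del: of_real_divide) (simp add: scaleR_conv_of_real)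
    also have "\<dots> = of_real (1 / real n) * (of_nat n * c1 + c3 * (\<Sum>j=1..n. (a1*b2)^j) + c4 * (\<Sum>j=1..n. (a2*b1)^j))"
      by (simp add: sum.distrib sum_distrib_left algebra_simps)
    also have "\<dots> = c1 + c3 * (of_real (1 / real n) * (\<Sum>j=1..n. (a1*b2)^j))
           + c4 * (of_real (1 / real n) * (\<Sum>j=1..n. (a2*b1)^j))"
      using n by (simp add: field_simps)
    finally show "c1 + c3 * (of_real (1 / real n) * (\<Sum>j=1..n. (a1*b2)^j))
           + c4 * (of_real (1 / real n) * (\<Sum>j=1..n. (a2*b1)^j))
     = ((1 / real n) *\<^sub>R (\<Sum>j=1..n. (\<chi> i k. a1^j * X1$i$k + a2^j * X2$i$k) ** (\<chi> i k. b1^j * Y1$i$k + b2^j * Y2$i$k))) $ i $ k" by simp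
  qed
  have "(\<lambda>n. c1 + c3 * (of_real (1 / real n) * (\<Sum>j=1..n. (a1*b2)^j))
           + c4 * (of_real (1 / real n) * (\<Sum>j=1..n. (a2*b1)^j))) \<longlonglongrightarrow> c1 + c3 * 0 + c4 * 0"
    by (intro tendsto_intros cesaro_geo m1 m2)
  hence "(\<lambda>n. c1 + c3 * (of_real (1 / real n) * (\<Sum>j=1..n. (a1*b2)^j))
           + c4 * (of_real (1 / real n) * (\<Sum>j=1..n. (a2*b1)^j))) \<longlonglongrightarrow> c1" by simp
  from tendsto_cong[OF ev, THEN iffD1, OF this]
  show "(\<lambda>n. ((1 / real n) *\<^sub>R (\<Sum>j=1..n. (\<chi> i k. a1^j * X1$i$k + a2^j * X2$i$k) ** (\<chi> i k. b1^j * Y1$i$k + b2^j * Y2$i$k))) $ i $ k)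
     \<longlonglongrightarrow> (X1 ** Y1 + X2 ** Y2) $ i $ k" by (simp add: c1_def)
qed



lemma cayley2:
  fixes T :: "complex^2^2"
  assumes s: "l1 + l2 = T$1$1 + T$2$2" and p: "l1*l2 = T$1$1*T$2$2 - T$1$2*T$2$1"
  shows "\<forall>i j. (\<Sum>k\<in>UNIV. T$i$k * (T$k$j - l2 * mat 1$k$j)) = l1 * (T$i$j - l2 * mat 1$i$j)"
    and "\<forall>i j. (\<Sum>k\<in>UNIV. (T$i$k - l2 * mat 1$i$k) * T$k$j) = l1 * (T$i$j - l2 * mat 1$i$j)"
    and "(T$1$1 - l2) * (T$2$2 - l2) = T$1$2 * T$2$1"
proof -
  have s2: "T$2$2 = l1 + l2 - T$1$1" using s by simp
  have p2: "T$1$2*T$2$1 = T$1$1*(l1 + l2 - T$1$1) - l1*l2" using p s2 by simp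
  show "\<forall>i j. (\<Sum>k\<in>UNIV. T$i$k * (T$k$j - l2 * mat 1$k$j)) = l1 * (T$i$j - l2 * mat 1$i$j)"
    unfolding forall_2 by (simp add: sum_2 mat_def s2 algebra_simps p2 ; algebra)
  show "\<forall>i j. (\<Sum>k\<in>UNIV. (T$i$k - l2 * mat 1$i$k) * T$k$j) = l1 * (T$i$j - l2 * mat 1$i$j)"
    unfolding forall_2 by (simp add: sum_2 mat_def s2 algebra_simps p2 ; algebra)
  show "(T$1$1 - l2) * (T$2$2 - l2) = T$1$2 * T$2$1"
    by (simp add: s2 p2 algebra_simps)
qed

lemma eig_mat:
  fixes T M :: "complex^'n^'n"
  assumes pb: "power_bounded T" and h: "H0 T = {0}"
    and TM: "\<forall>i j. (\<Sum>k\<in>UNIV. T$i$k * M$k$j) = l * M$i$j" and nz: "M$i$j \<noteq> 0"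
  shows "cmod l = 1"
proof -
  define v where "v = (\<chi> i. M$i$j)"
  have ev: "\<And>i. (\<Sum>k\<in>UNIV. T$i$k * v$k) = l * v$i" using TM by (simp add: v_def)
  have v0: "v \<noteq> 0" using nz by (metis v_def vec_lambda_beta zero_index)
  show ?thesis using eig_le1[OF pb ev v0] eig_ge1[OF h ev v0] by simp
qed

lemma matrix_inv_eq:
  fixes A X :: "'a::semiring_1^'n^'n"
  assumes "A ** X = mat 1" "X ** A = mat 1"
  shows "invertible A \<and> matrix_inv A = X"
proof -
  have inv: "invertible A" using assms unfolding invertible_def by blast
  define Y where "Y = matrix_inv A"
  have Y: "A ** Y = mat 1 \<and> Y ** A = mat 1"
    unfolding Y_def matrix_inv_def by (rule someI[of _ X]) (use assms in blast)
  have "Y = Y ** (A ** X)" by (simp add: assms matrix_mul_rid)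
  also have "\<dots> = (Y ** A) ** X" by (simp add: matrix_mul_assoc)
  also have "\<dots> = X" using Y by (simp add: matrix_mul_lid)
  finally show ?thesis using inv Y_def by simp
qed

lemma scal_inv:
  fixes A B :: "complex^'n^'n"
  assumes "A ** B = (\<chi> i j. k * mat 1$i$j)" "k \<noteq> 0"
  shows "A ** (\<chi> i j. B$i$j / k) = mat 1"
proof -
  have "(\<Sum>m\<in>UNIV. A$i$m * (B$m$j / k)) = mat 1 $i$j" for i j
  proof -
    have "(\<Sum>m\<in>UNIV. A$i$m * (B$m$j / k)) = (A ** B)$i$j / k"
      by (simp add: matrix_matrix_mult_def sum_divide_distrib)
    then show ?thesis using assms by (simp add: mat_def)
  qed
  then show ?thesis by (simp add: matrix_matrix_mult_def vec_eq_iff)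
qed

lemma cadj_cadj: "cadj (cadj A) = A"
  by (simp add: cadj_def vec_eq_iff)

lemma growth_false:
  fixes T N :: "complex^'n^'n"
  assumes pb: "power_bounded T" and l: "cmod l = 1"
    and TN0: "\<forall>i j. T$i$j = l * mat 1$i$j + N$i$j"
    and TN: "\<forall>i j. (\<Sum>k\<in>UNIV. T$i$k * N$k$j) = l * N$i$j" and nz: "N$a$b \<noteq> 0"
  shows False
proof -
  have l0: "l \<noteq> 0" using l by auto
  have form: "mpow T k = (\<chi> i j. l^k * mat 1$i$j + of_nat k * l^k * N$i$j / l)" for k
  proof (induction k)
    case 0 then show ?case by (simp add: mpow_0 vec_eq_iff)
  next
    case (Suc k)
    have "(\<Sum>m\<in>UNIV. T$i$m * (l^k * mat 1$m$j + of_nat k * l^k * N$m$j / l))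
        = l^Suc k * mat 1$i$j + of_nat (Suc k) * l^Suc k * N$i$j / l" for i j
    proof -
      have "(\<Sum>m\<in>UNIV. T$i$m * (l^k * mat 1$m$j + of_nat k * l^k * N$m$j / l))
          = l^k * (\<Sum>m\<in>UNIV. T$i$m * mat 1$m$j) + (of_nat k * l^k / l) * (\<Sum>m\<in>UNIV. T$i$m * N$m$j)"
        by (simp add: sum.distrib sum_distrib_left algebra_simps)
      also have "(\<Sum>m\<in>UNIV. T$i$m * mat 1$m$j) = T$i$j"
        using matrix_mul_rid[of T] by (simp add: matrix_matrix_mult_def vec_eq_iff)
      also have "(\<Sum>m\<in>UNIV. T$i$m * N$m$j) = l * N$i$j" using TN by blast
      finally have e: "(\<Sum>m\<in>UNIV. T$i$m * (l^k * mat 1$m$j + of_nat k * l^k * N$m$j / l))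
          = l^k * T$i$j + (of_nat k * l^k / l) * (l * N$i$j)" .
      show ?thesis unfolding e TN0[rule_format, of i j] using l0 by (simp add: field_simps)
    qed
    then show ?case by (simp add: mpow_Suc Suc matrix_matrix_mult_def vec_eq_iff)
  qed
  obtain M where M: "\<And>k. norm (mpow T k) \<le> M" using pb unfolding power_bounded_def by blast
  have bnd: "real k * cmod (N$a$b) - 1 \<le> M" for k
  proof -
    have "cmod (of_nat k * l^k * N$a$b / l) = real k * cmod (N$a$b)"
      using l by (simp add: norm_mult norm_divide norm_power)
    moreover have "cmod (l^k * mat 1$a$b) \<le> 1" using l by (simp add: norm_mult norm_power mat_def)
    moreover have "cmod (of_nat k * l^k * N$a$b / l) - cmod (l^k * mat 1$a$b) \<le> cmod (mpow T k $a$b)"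
      using norm_triangle_ineq3[of "of_nat k * l^k * N$a$b / l" "- (l^k * mat 1$a$b)"] by (simp add: form add.commute)
    moreover have "cmod (mpow T k $a$b) \<le> M" using entry_le_norm M order_trans by blast
    ultimately show ?thesis by linarith
  qed
  obtain k :: nat where "(M + 1) / cmod (N$a$b) < k" using reals_Archimedean2 by blast
  with bnd[of k] nz show False by (simp add: field_simps)
qed



lemma alg2:
  fixes P :: "complex^2^2"
  assumes tr: "P$1$1 + P$2$2 = 1" and det: "P$1$1*P$2$2 = P$1$2*P$2$1"
  defines "k \<equiv> (\<Sum>a\<in>UNIV. \<Sum>b\<in>UNIV. cnj (P$a$b) * P$a$b)"
  shows "(cadj P ** P + cadj (mat 1 - P) ** (mat 1 - P)) ** (P ** cadj P + (mat 1 - P) ** cadj (mat 1 - P))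
     = (\<chi> i j. k * mat 1 $ i $ j)"
   and "(P ** cadj P + (mat 1 - P) ** cadj (mat 1 - P)) ** (cadj P ** P + cadj (mat 1 - P) ** (mat 1 - P))
     = (\<chi> i j. k * mat 1 $ i $ j)"
   and "(cadj P ** P + cadj (mat 1 - P) ** (mat 1 - P)) + (P ** cadj P + (mat 1 - P) ** cadj (mat 1 - P))
     = (\<chi> i j. 2 * k * mat 1 $ i $ j)"
   and "k \<noteq> 0"
proof -
  have tr': "cnj (P$1$1) + cnj (P$2$2) = 1" using tr by (metis complex_cnj_add complex_cnj_one)
  have det': "cnj (P$1$1)*cnj (P$2$2) = cnj (P$1$2)*cnj(P$2$1)" using det by (metis complex_cnj_mult)
  show "(cadj P ** P + cadj (mat 1 - P) ** (mat 1 - P)) ** (P ** cadj P + (mat 1 - P) ** cadj (mat 1 - P))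
     = (\<chi> i j. k * mat 1 $ i $ j)"
    unfolding vec_eq_iff forall_2 k_def
    apply (simp add: cadj_def matrix_matrix_mult_def sum_2 mat_def)
    using tr det tr' det' apply (intro conjI) apply algebra+
    done
  show "(P ** cadj P + (mat 1 - P) ** cadj (mat 1 - P)) ** (cadj P ** P + cadj (mat 1 - P) ** (mat 1 - P))
     = (\<chi> i j. k * mat 1 $ i $ j)"
    unfolding vec_eq_iff forall_2 k_def
    apply (simp add: cadj_def matrix_matrix_mult_def sum_2 mat_def)
    using tr det tr' det' apply (intro conjI) apply algebra+
    done
  show "(cadj P ** P + cadj (mat 1 - P) ** (mat 1 - P)) + (P ** cadj P + (mat 1 - P) ** cadj (mat 1 - P))
     = (\<chi> i j. 2 * k * mat 1 $ i $ j)"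
    unfolding vec_eq_iff forall_2 k_def
    apply (simp add: cadj_def matrix_matrix_mult_def sum_2 mat_def)
    using tr det tr' det' apply (intro conjI) apply algebra+
    done
  have kr: "k = of_real ((cmod (P$1$1))^2 + (cmod (P$1$2))^2 + (cmod (P$2$1))^2 + (cmod (P$2$2))^2)"
  proof -
    have e: "cnj z * z = of_real ((cmod z)^2)" for z using complex_norm_square[of z] by (simp only: mult.commute)
    show ?thesis unfolding k_def sum_2 e of_real_add by (simp add: add.assoc)
  qed
  have "P$1$1 \<noteq> 0 \<or> P$2$2 \<noteq> 0" using tr by auto
  hence "0 < (cmod (P$1$1))^2 + (cmod (P$1$2))^2 + (cmod (P$2$1))^2 + (cmod (P$2$2))^2"
  proof
    assume "P$1$1 \<noteq> 0"
    hence "0 < (cmod (P$1$1))^2" by simp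
    moreover have "0 \<le> (cmod (P$1$2))^2 + (cmod (P$2$1))^2 + (cmod (P$2$2))^2" by simp
    ultimately show ?thesis by linarith
  next
    assume "P$2$2 \<noteq> 0"
    hence "0 < (cmod (P$2$2))^2" by simp
    moreover have "0 \<le> (cmod (P$1$2))^2 + (cmod (P$2$1))^2 + (cmod (P$1$1))^2" by simp
    ultimately show ?thesis by linarith
  qed
  then show "k \<noteq> 0" unfolding kr by (metis less_irrefl of_real_eq_0_iff)
qed



lemma div_eig:
  fixes T :: "complex^'n^'n"
  assumes "\<forall>i j. (\<Sum>k\<in>UNIV. T$i$k * N k j) = l * N i j"
  shows "\<forall>i j. (\<Sum>k\<in>UNIV. T$i$k * (\<chi> i j. N i j / c)$k$j) = l * (\<chi> i j. N i j / c)$i$j"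
  using assms by (simp flip: sum_divide_distrib)

lemma div_eig2:
  fixes T :: "complex^'n^'n"
  assumes "\<forall>i j. (\<Sum>k\<in>UNIV. N i k * T$k$j) = l * N i j"
  shows "\<forall>i j. (\<Sum>k\<in>UNIV. (\<chi> i j. N i j / c)$i$k * T$k$j) = l * (\<chi> i j. N i j / c)$i$j"
  using assms by (simp flip: sum_divide_distrib)

lemma scal_inv2:
  fixes A B :: "complex^'n^'n"
  assumes "B ** A = (\<chi> i j. k * mat 1$i$j)" "k \<noteq> 0"
  shows "(\<chi> i j. B$i$j / k) ** A = mat 1"
proof -
  have "(\<Sum>m\<in>UNIV. (B$i$m / k) * A$m$j) = mat 1 $i$j" for i j
  proof -
    have "(\<Sum>m\<in>UNIV. (B$i$m / k) * A$m$j) = (B ** A)$i$j / k"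
      by (simp add: matrix_matrix_mult_def sum_divide_distrib)
    then show ?thesis using assms by (simp add: mat_def)
  qed
  then show ?thesis by (simp add: matrix_matrix_mult_def vec_eq_iff)
qed

lemma unit_cnj: "cmod l = 1 \<Longrightarrow> cnj l * l = 1"
  by (metis complex_norm_square mult.commute of_real_1 power_one)

lemma cnj_adj_eig:
  fixes T P :: "complex^'n^'n"
  assumes "\<forall>i j. (\<Sum>k\<in>UNIV. P$i$k * T$k$j) = l * P$i$j"
  shows "\<forall>i j. (\<Sum>k\<in>UNIV. cadj T$i$k * cadj P$k$j) = cnj l * cadj P$i$j"
proof (intro allI)
  fix i j
  have "(\<Sum>k\<in>UNIV. cadj T$i$k * cadj P$k$j) = cnj (\<Sum>k\<in>UNIV. P$j$k * T$k$i)"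
    by (simp add: cadj_def mult.commute)
  also have "\<dots> = cnj l * cadj P$i$j" using assms by (simp add: cadj_def)
  finally show "(\<Sum>k\<in>UNIV. cadj T$i$k * cadj P$k$j) = cnj l * cadj P$i$j" .
qed

lemma distinct_case:
  fixes T :: "complex^2^2"
  assumes pb: "power_bounded T" and h: "H0 T = {0}"
    and s: "l1 + l2 = T$1$1 + T$2$2" and p: "l1*l2 = T$1$1*T$2$2 - T$1$2*T$2$1" and ne: "l1 \<noteq> l2"
  shows "\<exists>A B. cesaro_mean T \<longlonglongrightarrow> A \<and> cesaro_mean (cadj T) \<longlonglongrightarrow> B \<and>
           invertible A \<and> invertible B \<and>
           matrix_inv A + matrix_inv B = 2 *\<^sub>R (mat 1 :: complex^2^2)"
proof -
  have d1: "l1 - l2 \<noteq> 0" and d2: "l2 - l1 \<noteq> 0" using ne by auto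
  define P :: "complex^2^2" where "P = (\<chi> i j. (T$i$j - l2 * mat 1$i$j)/(l1-l2))"
  define Q where "Q = mat 1 - P"
  have Qe: "Q = (\<chi> i j. (T$i$j - l1 * mat 1$i$j)/(l2-l1))"
    unfolding Q_def P_def vec_eq_iff using d1 d2 by (auto simp: mat_def field_simps)
  have s': "l2 + l1 = T$1$1 + T$2$2" and p': "l2*l1 = T$1$1*T$2$2 - T$1$2*T$2$1" using s p by (simp_all add: ac_simps)
  note c1 = cayley2[OF s p] and c2 = cayley2[OF s' p']
  have TP: "\<forall>i j. (\<Sum>k\<in>UNIV. T$i$k * P$k$j) = l1 * P$i$j"
    unfolding P_def by (rule div_eig[OF c1(1)])
  have PT: "\<forall>i j. (\<Sum>k\<in>UNIV. P$i$k * T$k$j) = l1 * P$i$j"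
    unfolding P_def by (rule div_eig2[OF c1(2)])
  have TQ: "\<forall>i j. (\<Sum>k\<in>UNIV. T$i$k * Q$k$j) = l2 * Q$i$j"
    unfolding Qe by (rule div_eig[OF c2(1)])
  have QT: "\<forall>i j. (\<Sum>k\<in>UNIV. Q$i$k * T$k$j) = l2 * Q$i$j"
    unfolding Qe by (rule div_eig2[OF c2(2)])
  have trP: "P$1$1 + P$2$2 = 1"
  proof -
    have "P$1$1 + P$2$2 = ((T$1$1 - l2) + (T$2$2 - l2)) / (l1 - l2)"
      by (simp add: P_def mat_def add_divide_distrib[symmetric])
    also have "(T$1$1 - l2) + (T$2$2 - l2) = l1 - l2" using s by (simp add: algebra_simps)
    finally show ?thesis using d1 by simp
  qed
  have detP: "P$1$1*P$2$2 = P$1$2*P$2$1"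
  proof -
    have "P$1$1*P$2$2 = ((T$1$1 - l2) * (T$2$2 - l2)) / ((l1 - l2)*(l1-l2))" by (simp add: P_def mat_def)
    also have "\<dots> = (T$1$2 * T$2$1) / ((l1 - l2)*(l1-l2))" using c1(3) by simp
    also have "\<dots> = P$1$2*P$2$1" by (simp add: P_def mat_def)
    finally show ?thesis .
  qed
  have trQ: "Q$1$1 + Q$2$2 = 1" using trP by (simp add: Q_def mat_def algebra_simps)
  have u1: "cmod l1 = 1"
  proof -
    from trP have "P$1$1 \<noteq> 0 \<or> P$2$2 \<noteq> 0" by auto
    then show ?thesis using eig_mat[OF pb h TP] by blast
  qed
  have u2: "cmod l2 = 1"
  proof -
    from trQ have "Q$1$1 \<noteq> 0 \<or> Q$2$2 \<noteq> 0" by auto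
    then show ?thesis using eig_mat[OF pb h TQ] by blast
  qed
  have PQ: "\<And>i j. P$i$j + Q$i$j = mat 1$i$j" by (simp add: Q_def)
  have PQ': "\<And>i j. cadj P$i$j + cadj Q$i$j = mat 1$i$j"
    by (simp add: Q_def cadj_def mat_def)
  have mpT: "mpow T n = (\<chi> i j. l1^n * P$i$j + l2^n * Q$i$j)" for n
    by (rule mpow_form) (use TP TQ PQ in auto)
  have mpC: "mpow (cadj T) n = (\<chi> i j. (cnj l1)^n * cadj P$i$j + (cnj l2)^n * cadj Q$i$j)" for n
    by (rule mpow_form) (use cnj_adj_eig[OF PT] cnj_adj_eig[OF QT] PQ' in auto)
  have v1: "cnj l1 * l1 = 1" "l1 * cnj l1 = 1" using unit_cnj[OF u1] by (simp_all add: mult.commute)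
  have v2: "cnj l2 * l2 = 1" "l2 * cnj l2 = 1" using unit_cnj[OF u2] by (simp_all add: mult.commute)
  have m12: "cmod (cnj l1 * l2) = 1" "cmod (cnj l2 * l1) = 1" "cmod (l1 * cnj l2) = 1" "cmod (l2 * cnj l1) = 1"
    using u1 u2 by (simp_all add: norm_mult)
  have n12: "cnj l1 * l2 \<noteq> 1"
  proof
    assume "cnj l1 * l2 = 1"
    hence "l1 * (cnj l1 * l2) = l1" by simp
    hence "l2 = l1" using v1 by (simp add: mult.assoc[symmetric])
    with ne show False by simp
  qed
  have n21: "cnj l2 * l1 \<noteq> 1"
  proof
    assume "cnj l2 * l1 = 1"
    hence "l2 * (cnj l2 * l1) = l2" by simp
    hence "l1 = l2" using v2 by (simp add: mult.assoc[symmetric])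
    with ne show False by simp
  qed
  have n12': "l1 * cnj l2 \<noteq> 1" using n21 by (simp add: mult.commute)
  have n21': "l2 * cnj l1 \<noteq> 1" using n12 by (simp add: mult.commute)
  define A0 where "A0 = cadj P ** P + cadj Q ** Q"
  define B0 where "B0 = P ** cadj P + Q ** cadj Q"
  have limA: "cesaro_mean T \<longlonglongrightarrow> A0"
    unfolding A0_def cesaro_mean_def mpT mpC
    by (rule cesaro_gen) (use v1 v2 m12 n12 n21 in auto)
  have limB: "cesaro_mean (cadj T) \<longlonglongrightarrow> B0"
    unfolding B0_def cesaro_mean_def mpT mpC cadj_cadj
    by (rule cesaro_gen) (use v1 v2 m12 n12' n21' in auto)
  define k where "k = (\<Sum>a\<in>UNIV. \<Sum>b\<in>UNIV. cnj (P$a$b) * P$a$b)"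
  have al: "A0 ** B0 = (\<chi> i j. k * mat 1 $ i $ j)" "B0 ** A0 = (\<chi> i j. k * mat 1 $ i $ j)"
     "A0 + B0 = (\<chi> i j. 2 * k * mat 1 $ i $ j)" "k \<noteq> 0"
    unfolding A0_def B0_def Q_def k_def using alg2[OF trP detP] by auto
  have iA: "invertible A0 \<and> matrix_inv A0 = (\<chi> i j. B0$i$j / k)"
    by (rule matrix_inv_eq[OF scal_inv[OF al(1) al(4)] scal_inv2[OF al(2) al(4)]])
  have iB: "invertible B0 \<and> matrix_inv B0 = (\<chi> i j. A0$i$j / k)"
    by (rule matrix_inv_eq[OF scal_inv[OF al(2) al(4)] scal_inv2[OF al(1) al(4)]])
  have "matrix_inv A0 + matrix_inv B0 = 2 *\<^sub>R (mat 1 :: complex^2^2)"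
  proof -
    have "(A0 + B0)$i$j = 2 * k * mat 1$i$j" for i j using al(3) by (simp add: vec_eq_iff)
    hence "B0$i$j / k + A0$i$j / k = 2 * mat 1$i$j" for i j
      using al(4) by (simp add: add_divide_distrib[symmetric] add.commute)
    then show ?thesis using iA iB by (simp add: vec_eq_iff scaleR_conv_of_real)
  qed
  then show ?thesis using limA limB iA iB by blast
qed

lemma equal_case:
  fixes T :: "complex^2^2"
  assumes pb: "power_bounded T" and h: "H0 T = {0}"
    and s: "l + l = T$1$1 + T$2$2" and p: "l*l = T$1$1*T$2$2 - T$1$2*T$2$1"
  shows "\<exists>A B. cesaro_mean T \<longlonglongrightarrow> A \<and> cesaro_mean (cadj T) \<longlonglongrightarrow> B \<and>
           invertible A \<and> invertible B \<and>
           matrix_inv A + matrix_inv B = 2 *\<^sub>R (mat 1 :: complex^2^2)"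
proof (cases "\<forall>i j. T$i$j - l * mat 1$i$j = 0")
  case False
  then obtain a b where nz: "T$a$b - l * mat 1$a$b \<noteq> 0" by blast
  define N :: "complex^2^2" where "N = (\<chi> i j. T$i$j - l * mat 1$i$j)"
  have TN: "\<forall>i j. (\<Sum>k\<in>UNIV. T$i$k * N$k$j) = l * N$i$j"
    using cayley2(1)[OF s p] by (simp add: N_def)
  have u: "cmod l = 1" using eig_mat[OF pb h TN, of a b] nz by (simp add: N_def)
  have False
    by (rule growth_false[OF pb u _ TN, of a b]) (use nz in \<open>auto simp: N_def\<close>)
  then show ?thesis ..
next
  case True
  hence Te: "\<And>i j. T$i$j = l * mat 1$i$j" by simp
  have TM: "\<forall>i j. (\<Sum>k\<in>UNIV. T$i$k * mat 1$k$j) = l * mat 1$i$j"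
    using matrix_mul_rid[of T] Te by (simp add: matrix_matrix_mult_def vec_eq_iff)
  have u: "cmod l = 1" using eig_mat[OF pb h TM, of 1 1] by (simp add: mat_def)
  have v: "cnj l * l = 1" "l * cnj l = 1" using unit_cnj[OF u] by (simp_all add: mult.commute)
  have Ce: "\<And>i j. cadj T$i$j = cnj l * mat 1$i$j" by (simp add: cadj_def Te mat_def)
  have CM: "\<forall>i j. (\<Sum>k\<in>UNIV. cadj T$i$k * mat 1$k$j) = cnj l * mat 1$i$j"
    using matrix_mul_rid[of "cadj T"] Ce by (simp add: matrix_matrix_mult_def vec_eq_iff)
  have mpT: "mpow T n = (\<chi> i j. l^n * mat 1$i$j + l^n * (0::complex^2^2)$i$j)" for n
    by (rule mpow_form) (use TM in auto)
  have mpC: "mpow (cadj T) n = (\<chi> i j. (cnj l)^n * mat 1$i$j + (cnj l)^n * (0::complex^2^2)$i$j)" for n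
    by (rule mpow_form) (use CM in auto)
  have mT: "mpow T n = (\<chi> i j. l^n * mat 1$i$j)" for n using mpT by simp
  have mC: "mpow (cadj T) n = (\<chi> i j. (cnj l)^n * mat 1$i$j)" for n using mpC by simp
  have prod: "(\<chi> i j. c^n * mat 1$i$j) ** (\<chi> i j. d^n * mat 1$i$j) = (mat 1 :: complex^2^2)" if "c * d = 1" for c d :: complex and n :: nat
  proof -
    have "(\<chi> i j. c^n * mat 1$i$j) ** (\<chi> i j. d^n * mat 1$i$j) = (\<chi> i j. (c*d)^n * (mat 1 ** mat 1 :: complex^2^2)$i$j)"
      by (simp add: matrix_matrix_mult_def vec_eq_iff sum_distrib_left power_mult_distrib algebra_simps)
    then show ?thesis using that by (simp add: matrix_mul_lid)
  qed
  have cm: "cesaro_mean S \<longlonglongrightarrow> mat 1" if "\<And>j. mpow (cadj S) j ** mpow S j = mat 1" for S :: "complex^2^2"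
  proof (rule tendsto_eventually, rule eventually_sequentiallyI[of 1])
    fix n :: nat assume "1 \<le> n"
    then show "cesaro_mean S n = mat 1" by (simp add: cesaro_mean_def that sum_constant_scaleR del: sum_constant)
  qed
  have lA: "cesaro_mean T \<longlonglongrightarrow> mat 1" by (rule cm) (simp add: mT mC prod[OF v(1)])
  have lB: "cesaro_mean (cadj T) \<longlonglongrightarrow> mat 1" by (rule cm) (simp add: mT mC prod[OF v(2)] cadj_cadj)
  have i1: "invertible (mat 1 :: complex^2^2) \<and> matrix_inv (mat 1 :: complex^2^2) = mat 1"
    by (rule matrix_inv_eq) (simp_all add: matrix_mul_lid)
  have "matrix_inv (mat 1) + matrix_inv (mat 1) = 2 *\<^sub>R (mat 1 :: complex^2^2)"
    using i1 by (simp add: vec_eq_iff mat_def scaleR_conv_of_real)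
  then show ?thesis using lA lB i1 by blast
qed

theorem mainTheorem9:
  fixes T :: "complex^2^2"
  assumes "power_bounded T" and "class_C11 T"
  shows "\<exists>A B. cesaro_mean T \<longlonglongrightarrow> A \<and> cesaro_mean (cadj T) \<longlonglongrightarrow> B \<and>
           invertible A \<and> invertible B \<and>
           matrix_inv A + matrix_inv B = 2 *\<^sub>R (mat 1 :: complex^2^2)"
proof -
  have h: "H0 T = {0}" using assms(2) by (simp add: class_C11_def)
  define t where "t = T$1$1 + T$2$2"
  define dt where "dt = T$1$1*T$2$2 - T$1$2*T$2$1"
  define r where "r = csqrt (t^2 - 4*dt)"
  define l1 where "l1 = (t + r)/2"
  define l2 where "l2 = (t - r)/2"
  have r2: "r^2 = t^2 - 4*dt" unfolding r_def by simp
  have s: "l1 + l2 = T$1$1 + T$2$2" unfolding l1_def l2_def t_def by (simp add: field_simps)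
  have p: "l1*l2 = T$1$1*T$2$2 - T$1$2*T$2$1"
  proof -
    have "l1*l2 = (t^2 - r^2)/4" unfolding l1_def l2_def by (simp add: field_simps power2_eq_square)
    also have "\<dots> = dt" using r2 by simp
    finally show ?thesis by (simp add: dt_def)
  qed
  show ?thesis
  proof (cases "l1 = l2")
    case False then show ?thesis using distinct_case[OF assms(1) h s p] by blast
  next
    case True then show ?thesis using equal_case[OF assms(1) h, of l1] s p by simp
  qed
qed


end
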